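(* Let $A \in L(H)$ be hyperbolic, let $M_1 \coloneqq \sup_{z \in S_1} |(z-A)^{-1}|_{L(H)}$, and let $F \colon \ell_2(\mathbb{Z}; H) \to \ell_2(\mathbb{Z}; H)$ have Lipschitz constant $|F|_{\operatorname{Lip}(\ell_2(\mathbb{Z}; H))} < 1/M_1$. Let $P\coloneqq P_1^+$, $Q\coloneqq P_1^-$ be the Riesz projections, $\xi \in P[H]$ and $u \in \ell_2(\mathbb{Z}; H)$. Then the following are equivalent: (i) $u$ is the unique fixed point of the contraction $\mathcal{L}_1(\xi, \cdot)\colon \ell_2(\mathbb{Z};H)\to\ell_2(\mathbb{Z};H)$, $w\mapsto \chi_{\mathbb{Z}_{\geq 0}}(\tau - A)^{-1}(F(w) + \delta_{-1}\xi)$; (ii) $\operatorname{spt} u \subseteq \mathbb{Z}_{\geq 0}$ and for all $n \in \mathbb{Z}_{\geq 0}$ $$P u_n = (PAP)^n \xi + \sum_{k = -\infty}^{n-1} (PAP)^{n-1-k} P F(u)_k,\qquad Q u_n = -\sum_{k = n}^{\infty} (QAQ)^{n-1-k} Q F(u)_k.$$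
   Context: $H$ is a separable complex Hilbert space. $A\in L(H)$ is hyperbolic if $\sigma(A)\cap S_1=\emptyset$, $S_1=\{|z|=1\}$. Riesz projections: $P_1^+ = \frac{1}{2\pi i}\int_{S_1}(z-A)^{-1}\,dz$, $P_1^- = I-P_1^+$; they commute with $A$, $\sigma(A|_{P[H]})=\sigma(A)\cap\{|z|<1\}$, $\sigma(A|_{Q[H]})=\sigma(A)\setminus\{|z|\le 1\}$ (so $A|_{Q[H]}$ is invertible). For $m<0$, $(QAQ)^m$ on $Q[H]$ means $((A|_{Q[H]})^{-1})^{-m}$; powers with exponent $0$ are the identity. $\ell_2(\mathbb{Z};H)$ is the space of square-summable two-sided $H$-valued sequences; $\tau$ is the shift $(\tau u)_n = u_{n+1}$; $A$ acts componentwise; $(\tau-A)^{-1}$ is the inverse of $\tau - A$ on $\ell_2(\mathbb{Z};H)$; $\delta_{-1}\xi$ has entry $\xi$ at index $-1$ and $0$ elsewhere; $\chi_{\mathbb{Z}_{\geq0}}$ is multiplication by the indicator of $\mathbb{Z}_{\geq 0}$; $\operatorname{spt} u=\{n: u_n\neq0\}$. *)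

theory Defs
  imports "HOL-Complex_Analysis.Complex_Analysis"
begin

text \<open>A complex Hilbert space is
  modelled as a complete real inner product space (inner = real part of the complex inner
  product) equipped with a complex scalar multiplication extending the real one, for which
  multiplication by the imaginary unit is an isometry. This is equivalent to the usual notion:
  the complex inner product is recovered as inner x y + i * inner x (i y) (up to convention).\<close>

class complex_hilbert = real_inner + complete_space +
  fixes scaleC :: "complex \<Rightarrow> 'a \<Rightarrow> 'a"  (infixr \<open>*\<^sub>C\<close> 75)
  assumes scaleC_add_right: "a *\<^sub>C (x + y) = a *\<^sub>C x + a *\<^sub>C y"
    and scaleC_add_left: "(a + b) *\<^sub>C x = a *\<^sub>C x + b *\<^sub>C x"
    and scaleC_scaleC: "a *\<^sub>C (b *\<^sub>C x) = (a * b) *\<^sub>C x"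
    and scaleC_of_real: "(complex_of_real r) *\<^sub>C x = r *\<^sub>R x"
    and inner_scaleC_ii: "inner (\<i> *\<^sub>C x) (\<i> *\<^sub>C y) = inner x y"

definition bounded_clinear_op :: "('a::complex_hilbert \<Rightarrow> 'a) \<Rightarrow> bool" where
  "bounded_clinear_op T \<longleftrightarrow> bounded_linear T \<and> (\<forall>c x. T (c *\<^sub>C x) = c *\<^sub>C T x)"

definition zminus :: "complex \<Rightarrow> ('a::complex_hilbert \<Rightarrow> 'a) \<Rightarrow> 'a \<Rightarrow> 'a" where
  "zminus z A = (\<lambda>x. z *\<^sub>C x - A x)"

definition spectrum :: "('a::complex_hilbert \<Rightarrow> 'a) \<Rightarrow> complex set" where
  "spectrum A = {z. \<not> (\<exists>B. bounded_clinear_op B \<and> B \<circ> zminus z A = id \<and> zminus z A \<circ> B = id)}"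

definition hyperbolic :: "('a::complex_hilbert \<Rightarrow> 'a) \<Rightarrow> bool" where
  "hyperbolic A \<longleftrightarrow> spectrum A \<inter> sphere 0 1 = {}"

definition resolvent :: "('a::complex_hilbert \<Rightarrow> 'a) \<Rightarrow> complex \<Rightarrow> 'a \<Rightarrow> 'a" where
  "resolvent A z = inv (zminus z A)"

definition M1 :: "('a::complex_hilbert \<Rightarrow> 'a) \<Rightarrow> real" where
  "M1 A = (SUP z\<in>sphere 0 1. onorm (resolvent A z))"

text \<open>Riesz projection P_1^+ = (1/(2 pi i)) \<integral>_{S_1} (z - A)^{-1} dz, with the integral over the
  positively oriented unit circle, taken strongly (applied to a vector x).\<close>
definition riesz_P :: "('a::complex_hilbert \<Rightarrow> 'a) \<Rightarrow> 'a \<Rightarrow> 'a" where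
  "riesz_P A x = (1 / (2 * complex_of_real pi * \<i>)) *\<^sub>C
     integral {0..1} (\<lambda>t. vector_derivative (circlepath 0 1) (at t within {0..1})
                          *\<^sub>C resolvent A (circlepath 0 1 t) x)"

definition riesz_Q :: "('a::complex_hilbert \<Rightarrow> 'a) \<Rightarrow> 'a \<Rightarrow> 'a" where
  "riesz_Q A x = x - riesz_P A x"

definition PAP_pow :: "('a::complex_hilbert \<Rightarrow> 'a) \<Rightarrow> nat \<Rightarrow> 'a \<Rightarrow> 'a" where
  "PAP_pow A m = (\<lambda>x. riesz_P A (A (riesz_P A x))) ^^ m"

definition QA_inv :: "('a::complex_hilbert \<Rightarrow> 'a) \<Rightarrow> 'a \<Rightarrow> 'a" where
  "QA_inv A y = (THE x. x \<in> range (riesz_Q A) \<and> A x = y)"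

text \<open>(QAQ)^{-m} = ((A|_{Q[H]})^{-1})^m on Q[H], for m \<ge> 0.\<close>
definition QAQ_negpow :: "('a::complex_hilbert \<Rightarrow> 'a) \<Rightarrow> nat \<Rightarrow> 'a \<Rightarrow> 'a" where
  "QAQ_negpow A m = QA_inv A ^^ m"

definition l2seq :: "(int \<Rightarrow> 'a::real_normed_vector) \<Rightarrow> bool" where
  "l2seq u \<longleftrightarrow> (\<lambda>n. (norm (u n))\<^sup>2) summable_on UNIV"

definition l2norm :: "(int \<Rightarrow> 'a::real_normed_vector) \<Rightarrow> real" where
  "l2norm u = sqrt (\<Sum>\<^sub>\<infinity>n\<in>UNIV. (norm (u n))\<^sup>2)"

definition shift_minus_inv :: "('a::complex_hilbert \<Rightarrow> 'a) \<Rightarrow> (int \<Rightarrow> 'a) \<Rightarrow> int \<Rightarrow> 'a" where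
  "shift_minus_inv A g = (THE v. l2seq v \<and> (\<forall>n. v (n + 1) - A (v n) = g n))"

definition delta_m1 :: "'a::zero \<Rightarrow> int \<Rightarrow> 'a" where
  "delta_m1 \<xi> = (\<lambda>n. if n = -1 then \<xi> else 0)"

definition chi_nonneg :: "(int \<Rightarrow> 'a::zero) \<Rightarrow> int \<Rightarrow> 'a" where
  "chi_nonneg w = (\<lambda>n. if 0 \<le> n then w n else 0)"

definition L1 :: "('a::complex_hilbert \<Rightarrow> 'a) \<Rightarrow> ((int \<Rightarrow> 'a) \<Rightarrow> (int \<Rightarrow> 'a)) \<Rightarrow> 'a
                   \<Rightarrow> (int \<Rightarrow> 'a) \<Rightarrow> int \<Rightarrow> 'a" where
  "L1 A F \<xi> w = chi_nonneg (shift_minus_inv A (\<lambda>n. F w n + delta_m1 \<xi> n))"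

definition spt :: "(int \<Rightarrow> 'a::zero) \<Rightarrow> int set" where
  "spt u = {n. u n \<noteq> 0}"

end

theory Submission
  imports Defs
begin

instance complex_hilbert \<subseteq> banach ..

definition iC :: "'a::complex_hilbert \<Rightarrow> 'a" where "iC x = \<i> *\<^sub>C x"

lemma scaleC_expand: "(c::complex) *\<^sub>C (x::'a::complex_hilbert) = Re c *\<^sub>R x + Im c *\<^sub>R iC x"
proof -
  have "c = complex_of_real (Re c) + complex_of_real (Im c) * \<i>" by (simp add: complex_eq_iff)
  then have "c *\<^sub>C x = (complex_of_real (Re c) + complex_of_real (Im c) * \<i>) *\<^sub>C x" by simp
  also have "\<dots> = Re c *\<^sub>R x + Im c *\<^sub>R (\<i> *\<^sub>C x)"
    by (simp add: scaleC_add_left scaleC_scaleC[symmetric] scaleC_of_real)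
  finally show ?thesis by (simp add: iC_def)
qed

lemma iC_iC: "iC (iC (x::'a::complex_hilbert)) = - x"
proof -
  have "\<i> *\<^sub>C (\<i> *\<^sub>C x) = (-1) *\<^sub>C x" by (simp add: scaleC_scaleC)
  also have "\<dots> = - x" using scaleC_of_real[of "-1" x] by simp
  finally show ?thesis by (simp add: iC_def)
qed

lemma one_scaleC[simp]: "1 *\<^sub>C (x::'a::complex_hilbert) = x"
  using scaleC_of_real[of 1 x] by simp

lemma scaleC_zero_right[simp]: "c *\<^sub>C (0::'a::complex_hilbert) = 0"
  by (metis add_cancel_right_right scaleC_add_right)

lemma scaleC_zero_left[simp]: "0 *\<^sub>C (x::'a::complex_hilbert) = 0"
  using scaleC_of_real[of 0 x] by simp

lemma scaleC_minus_right: "c *\<^sub>C (- x::'a::complex_hilbert) = - (c *\<^sub>C x)"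
  by (metis add_eq_0_iff scaleC_add_right scaleC_zero_right)

lemma scaleC_diff_right: "c *\<^sub>C (x - y::'a::complex_hilbert) = c *\<^sub>C x - c *\<^sub>C y"
  by (metis diff_conv_add_uminus scaleC_add_right scaleC_minus_right)

lemma scaleC_scaleR_comm: "c *\<^sub>C (r *\<^sub>R (x::'a::complex_hilbert)) = r *\<^sub>R (c *\<^sub>C x)"
  by (metis mult.commute scaleC_of_real scaleC_scaleC)

lemma inner_iC_iC: "inner (iC x) (iC (y::'a::complex_hilbert)) = inner x y"
  unfolding iC_def by (rule inner_scaleC_ii)

lemma norm_iC[simp]: "norm (iC (x::'a::complex_hilbert)) = norm x"
  by (simp add: norm_eq_sqrt_inner inner_iC_iC)

lemma inner_iC_left: "inner (iC x) (y::'a::complex_hilbert) = - inner x (iC y)"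
proof -
  have "inner (iC x) y = inner (iC (iC x)) (iC y)" by (simp add: inner_iC_iC)
  also have "\<dots> = - inner x (iC y)" by (simp add: iC_iC)
  finally show ?thesis .
qed

lemma bounded_linear_iC: "bounded_linear (iC::'a::complex_hilbert \<Rightarrow> 'a)"
proof (rule bounded_linear_intro[where K=1])
  show "iC (x + y) = iC x + iC y" for x y :: 'a unfolding iC_def by (rule scaleC_add_right)
  show "iC (r *\<^sub>R x) = r *\<^sub>R iC x" for r and x :: 'a unfolding iC_def by (rule scaleC_scaleR_comm)
  show "norm (iC x) \<le> norm x * 1" for x :: 'a by simp
qed

lemma bounded_linear_scaleC: "bounded_linear (\<lambda>x::'a::complex_hilbert. c *\<^sub>C x)"
proof -
  have "bounded_linear (\<lambda>x::'a. Re c *\<^sub>R x + Im c *\<^sub>R iC x)"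
    by (rule bounded_linear_add[OF bounded_linear_scaleR_right bounded_linear_compose[OF bounded_linear_scaleR_right bounded_linear_iC]])
  then show ?thesis by (simp only: scaleC_expand)
qed

lemma bounded_linear_scaleC_left: "bounded_linear (\<lambda>c. c *\<^sub>C (x::'a::complex_hilbert))"
proof -
  have "bounded_linear (\<lambda>c. Re c *\<^sub>R x + Im c *\<^sub>R iC x)"
    by (rule bounded_linear_add[OF bounded_linear_compose[OF bounded_linear_scaleR_left bounded_linear_Re]
          bounded_linear_compose[OF bounded_linear_scaleR_left bounded_linear_Im]])
  then show ?thesis by (simp only: scaleC_expand)
qed

lemma inner_scaleC_unit:
  assumes "cmod c = 1"
  shows "inner (c *\<^sub>C x) (c *\<^sub>C (y::'a::complex_hilbert)) = inner x y"
proof -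
  have "(Re c)^2 + (Im c)^2 = 1" using assms unfolding cmod_def
    by (metis real_sqrt_eq_1_iff)
  have "inner (c *\<^sub>C x) (c *\<^sub>C y) = (Re c)^2 * inner x y + (Im c)^2 * inner (iC x) (iC y)
      + Re c * Im c * (inner x (iC y) + inner (iC x) y)"
    unfolding scaleC_expand by (simp add: inner_add_left inner_add_right algebra_simps power2_eq_square)
  also have "\<dots> = ((Re c)^2 + (Im c)^2) * inner x y"
    using inner_iC_left[of x y] by (simp add: inner_iC_iC algebra_simps)
  finally show ?thesis using \<open>(Re c)^2 + (Im c)^2 = 1\<close> by simp
qed

lemma norm_scaleC_unit: "cmod c = 1 \<Longrightarrow> norm (c *\<^sub>C (x::'a::complex_hilbert)) = norm x"
  by (simp add: norm_eq_sqrt_inner inner_scaleC_unit)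

lemma continuous_on_scaleC[continuous_intros]:
  fixes f :: "'b::topological_space \<Rightarrow> complex" and g :: "'b \<Rightarrow> 'a::complex_hilbert"
  assumes "continuous_on S f" "continuous_on S g"
  shows "continuous_on S (\<lambda>t. f t *\<^sub>C g t)"
  unfolding scaleC_expand
  by (intro continuous_intros assms bounded_linear.continuous_on[OF bounded_linear_iC])

definition cc :: "int \<Rightarrow> real \<Rightarrow> complex" where
  "cc m t = cis (2 * pi * of_int m * t)"

lemma cc_mult: "cc m t * cc k t = cc (m + k) t"
  by (simp add: cc_def cis_mult algebra_simps)

lemma norm_cc[simp]: "cmod (cc m t) = 1"
  by (simp add: cc_def)

lemma continuous_on_cc[continuous_intros]: "continuous_on S (cc m)"
  unfolding cc_def by (intro continuous_intros)

lemma cos_integral: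
  "((\<lambda>t. cos (2 * pi * of_int m * t)) has_integral (if m = 0 then 1 else 0)) {0..1}"
proof (cases "m = 0")
  case True
  then show ?thesis using has_integral_const_real[of "1::real" 0 1] by simp
next
  case False
  have d: "((\<lambda>t. sin (2 * pi * of_int m * t) / (2 * pi * of_int m)) has_vector_derivative cos (2 * pi * of_int m * t)) (at t within {0..1})" for t
    unfolding has_real_derivative_iff_has_vector_derivative[symmetric]
    using False by (auto intro!: derivative_eq_intros)
  have "((\<lambda>t. cos (2 * pi * of_int m * t)) has_integral
     (sin (2 * pi * of_int m * 1) / (2 * pi * of_int m) - sin (2 * pi * of_int m * 0) / (2 * pi * of_int m))) {0..1}"
    by (rule fundamental_theorem_of_calculus) (use d in auto)
  then show ?thesis using False by simp
qed

lemma sin_integral: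
  "((\<lambda>t. sin (2 * pi * of_int m * t)) has_integral 0) {0..1}"
proof (cases "m = 0")
  case True
  then show ?thesis by simp
next
  case False
  have d: "((\<lambda>t. - cos (2 * pi * of_int m * t) / (2 * pi * of_int m)) has_vector_derivative sin (2 * pi * of_int m * t)) (at t within {0..1})" for t
    unfolding has_real_derivative_iff_has_vector_derivative[symmetric]
    using False by (auto intro!: derivative_eq_intros)
  have "((\<lambda>t. sin (2 * pi * of_int m * t)) has_integral
     (- cos (2 * pi * of_int m * 1) / (2 * pi * of_int m) - (- cos (2 * pi * of_int m * 0) / (2 * pi * of_int m)))) {0..1}"
    by (rule fundamental_theorem_of_calculus) (use d in auto)
  then show ?thesis using False by simp
qed

lemma cc_scaleC_integral:
  "((\<lambda>t. cc m t *\<^sub>C (x::'a::complex_hilbert)) has_integral (if m = 0 then x else 0)) {0..1}"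
proof -
  have h: "((\<lambda>t. cos (2 * pi * of_int m * t) *\<^sub>R x + sin (2 * pi * of_int m * t) *\<^sub>R (iC x)) has_integral
      ((if m = 0 then 1 else 0) *\<^sub>R x + 0 *\<^sub>R (iC x))) {0..1}"
    by (intro has_integral_add has_integral_scaleR_left cos_integral sin_integral)
  have eq: "(\<lambda>t. cc m t *\<^sub>C x) = (\<lambda>t. cos (2 * pi * of_int m * t) *\<^sub>R x + sin (2 * pi * of_int m * t) *\<^sub>R (iC x))"
    by (simp add: cc_def scaleC_expand fun_eq_iff)
  have v: "(if m = 0 then 1 else 0) *\<^sub>R x + 0 *\<^sub>R (iC x) = (if m = 0 then x else 0)" by simp
  show ?thesis unfolding eq v[symmetric] by (rule h)
qed

definition fc :: "(real \<Rightarrow> 'a::complex_hilbert) \<Rightarrow> int \<Rightarrow> 'a" where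
  "fc f m = integral {0..1} (\<lambda>t. cc m t *\<^sub>C f t)"

lemma cc_zero[simp]: "cc 0 t = 1" by (simp add: cc_def)

lemma inner_cc_move:
  "inner (y::'a::complex_hilbert) (cc (-m) t *\<^sub>C c) = inner (cc m t *\<^sub>C y) c"
proof -
  have "inner y (cc (-m) t *\<^sub>C c) = inner (cc m t *\<^sub>C y) (cc m t *\<^sub>C (cc (-m) t *\<^sub>C c))"
    by (simp add: inner_scaleC_unit)
  also have "cc m t *\<^sub>C (cc (-m) t *\<^sub>C c) = c" by (simp add: scaleC_scaleC cc_mult)
  finally show ?thesis .
qed

lemma inner_cc_cc:
  "inner (cc a t *\<^sub>C (x::'a::complex_hilbert)) (cc b t *\<^sub>C y) = inner (cc (a - b) t *\<^sub>C x) y"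
proof -
  have "inner (cc a t *\<^sub>C x) (cc b t *\<^sub>C y) = inner (cc (-b) t *\<^sub>C (cc a t *\<^sub>C x)) (cc (-b) t *\<^sub>C (cc b t *\<^sub>C y))"
    by (simp add: inner_scaleC_unit)
  also have "\<dots> = inner (cc (a - b) t *\<^sub>C x) y" by (simp add: scaleC_scaleC cc_mult)
  finally show ?thesis .
qed

lemma inner_cc_integral:
  "((\<lambda>t. inner (cc m t *\<^sub>C (x::'a::complex_hilbert)) y) has_integral (if m = 0 then inner x y else 0)) {0..1}"
proof -
  have "(((\<lambda>z. inner z y) \<circ> (\<lambda>t. cc m t *\<^sub>C x)) has_integral (inner (if m = 0 then x else 0) y)) {0..1}"
    by (rule has_integral_linear[OF cc_scaleC_integral bounded_linear_inner_left])
  then show ?thesis by (cases "m = 0") (simp_all add: o_def)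
qed

lemma parseval_trig:
  fixes c :: "int \<Rightarrow> 'a::complex_hilbert"
  assumes "finite N"
  shows "((\<lambda>t. (norm (\<Sum>m\<in>N. cc (-m) t *\<^sub>C c m))\<^sup>2) has_integral (\<Sum>m\<in>N. (norm (c m))\<^sup>2)) {0..1}"
proof -
  have eq: "(norm (\<Sum>m\<in>N. cc (-m) t *\<^sub>C c m))\<^sup>2 = (\<Sum>k\<in>N. \<Sum>m\<in>N. inner (cc (k - m) t *\<^sub>C c m) (c k))" for t
    by (simp add: power2_norm_eq_inner inner_sum_left inner_sum_right inner_cc_cc)
  have "((\<lambda>t. \<Sum>k\<in>N. \<Sum>m\<in>N. inner (cc (k - m) t *\<^sub>C c m) (c k)) has_integral
      (\<Sum>k\<in>N. \<Sum>m\<in>N. if k - m = 0 then inner (c m) (c k) else 0)) {0..1}"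
    by (intro has_integral_sum assms inner_cc_integral)
  moreover have "(\<Sum>k\<in>N. \<Sum>m\<in>N. if k - m = 0 then inner (c m) (c k) else 0) = (\<Sum>m\<in>N. (norm (c m))\<^sup>2)"
    by (rule sum.cong) (auto simp: power2_norm_eq_inner assms)
  ultimately show ?thesis unfolding eq by simp
qed

lemma norm_diff_sq_inner: "(norm (x - y))\<^sup>2 = (norm x)\<^sup>2 - 2 * inner x y + (norm (y::'a::real_inner))\<^sup>2"
  by (simp add: power2_norm_eq_inner inner_diff_left inner_diff_right inner_commute)

lemma bessel:
  fixes f :: "real \<Rightarrow> 'a::complex_hilbert"
  assumes f: "continuous_on {0..1} f" and N: "finite N"
  shows "(\<Sum>m\<in>N. (norm (fc f m))\<^sup>2) \<le> integral {0..1} (\<lambda>t. (norm (f t))\<^sup>2)"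
proof -
  define c where "c = fc f"
  define s where "s t = (\<Sum>m\<in>N. cc (-m) t *\<^sub>C c m)" for t
  have h1: "((\<lambda>t. (norm (f t))\<^sup>2) has_integral integral {0..1} (\<lambda>t. (norm (f t))\<^sup>2)) {0..1}"
    by (intro integrable_integral integrable_continuous_real continuous_intros f)
  have int_m: "((\<lambda>t. cc m t *\<^sub>C f t) has_integral c m) {0..1}" for m
    unfolding c_def fc_def
    by (intro integrable_integral integrable_continuous_real continuous_intros f)
  have "((\<lambda>t. inner (cc m t *\<^sub>C f t) (c m)) has_integral inner (c m) (c m)) {0..1}" for m
    using has_integral_linear[OF int_m bounded_linear_inner_left[of "c m"]] by (simp add: o_def)
  then have h2: "((\<lambda>t. inner (f t) (s t)) has_integral (\<Sum>m\<in>N. (norm (c m))\<^sup>2)) {0..1}"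
    unfolding s_def inner_sum_right inner_cc_move power2_norm_eq_inner
    by (intro has_integral_sum N)
  have h3: "((\<lambda>t. (norm (s t))\<^sup>2) has_integral (\<Sum>m\<in>N. (norm (c m))\<^sup>2)) {0..1}"
    unfolding s_def by (rule parseval_trig[OF N])
  have "((\<lambda>t. (norm (f t))\<^sup>2 - 2 * inner (f t) (s t) + (norm (s t))\<^sup>2) has_integral
      (integral {0..1} (\<lambda>t. (norm (f t))\<^sup>2) - 2 * (\<Sum>m\<in>N. (norm (c m))\<^sup>2) + (\<Sum>m\<in>N. (norm (c m))\<^sup>2))) {0..1}"
    by (intro has_integral_add has_integral_diff has_integral_mult_right h1 h2 h3)
  then have "((\<lambda>t. (norm (f t - s t))\<^sup>2) has_integral
      (integral {0..1} (\<lambda>t. (norm (f t))\<^sup>2) - 2 * (\<Sum>m\<in>N. (norm (c m))\<^sup>2) + (\<Sum>m\<in>N. (norm (c m))\<^sup>2))) {0..1}"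
    unfolding norm_diff_sq_inner .
  then have "0 \<le> integral {0..1} (\<lambda>t. (norm (f t))\<^sup>2) - 2 * (\<Sum>m\<in>N. (norm (c m))\<^sup>2) + (\<Sum>m\<in>N. (norm (c m))\<^sup>2)"
    by (rule has_integral_nonneg) simp
  then show ?thesis unfolding c_def by simp
qed

lemma bl_sum:
  assumes "bounded_linear f" shows "f (\<Sum>a\<in>S. g a) = (\<Sum>a\<in>S. f (g a))"
proof -
  interpret f: bounded_linear f by fact
  show ?thesis by (induct S rule: infinite_finite_induct) (auto simp: f.zero f.add)
qed

lemma bl_add: assumes "bounded_linear f" shows "f (x + y) = f x + f y"
proof - interpret f: bounded_linear f by fact show ?thesis by (rule f.add) qed
lemma bl_diff: assumes "bounded_linear f" shows "f (x - y) = f x - f y"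
proof - interpret f: bounded_linear f by fact show ?thesis by (rule f.diff) qed
lemma bl_minus: assumes "bounded_linear f" shows "f (- x) = - f x"
proof - interpret f: bounded_linear f by fact show ?thesis by (rule f.neg) qed
lemma bl_zero: assumes "bounded_linear f" shows "f 0 = 0"
proof - interpret f: bounded_linear f by fact show ?thesis by (rule f.zero) qed
lemma bl_scaleR: assumes "bounded_linear f" shows "f (r *\<^sub>R x) = r *\<^sub>R f x"
proof - interpret f: bounded_linear f by fact show ?thesis by (rule f.scaleR) qed

lemma norm_scaleC: "norm (c *\<^sub>C (y::'a::complex_hilbert)) = cmod c * norm y"
proof -
  have i0: "inner y (iC y) = 0"
    using inner_iC_left[of y y] inner_commute[of "iC y" y] by simp
  have "(norm (c *\<^sub>C y))\<^sup>2 = ((Re c)^2 + (Im c)^2) * (norm y)\<^sup>2"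
    unfolding scaleC_expand power2_norm_eq_inner
    using i0 inner_commute[of "iC y" y]
    by (simp add: inner_add_left inner_add_right inner_iC_iC algebra_simps power2_eq_square)
  also have "\<dots> = (cmod c * norm y)\<^sup>2" by (simp add: cmod_def power_mult_distrib)
  finally show ?thesis by (simp add: power2_eq_iff_nonneg)
qed

lemma bclin_bl: "bounded_clinear_op f \<Longrightarrow> bounded_linear f"
  by (simp add: bounded_clinear_op_def)

lemma bclin_scaleC: "bounded_clinear_op f \<Longrightarrow> f (c *\<^sub>C x) = c *\<^sub>C f x"
  by (simp add: bounded_clinear_op_def)

locale hyp_op =
  fixes A :: "'a::complex_hilbert \<Rightarrow> 'a"
  assumes A_bdd: "bounded_clinear_op A"
    and hyp: "hyperbolic A"
begin

abbreviation "R \<equiv> resolvent A"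

lemma A_bl: "bounded_linear A" using A_bdd by (rule bclin_bl)

lemma R_props:
  assumes "z \<in> sphere 0 1"
  shows "bounded_clinear_op (R z) \<and> (\<forall>x. z *\<^sub>C R z x - A (R z x) = x) \<and> (\<forall>x. R z (z *\<^sub>C x - A x) = x)"
proof -
  have "z \<notin> spectrum A" using hyp assms unfolding hyperbolic_def by blast
  then obtain B where B: "bounded_clinear_op B" "B \<circ> zminus z A = id" "zminus z A \<circ> B = id"
    unfolding spectrum_def by blast
  have "R z = B" unfolding resolvent_def by (rule inv_unique_comp[OF B(3) B(2)])
  show ?thesis unfolding \<open>R z = B\<close> using B by (auto simp: zminus_def fun_eq_iff o_def)
qed

lemma R_bcl: "z \<in> sphere 0 1 \<Longrightarrow> bounded_clinear_op (R z)" using R_props by blast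
lemma R_bl: "z \<in> sphere 0 1 \<Longrightarrow> bounded_linear (R z)" using R_props bclin_bl by blast
lemma R_right: "z \<in> sphere 0 1 \<Longrightarrow> z *\<^sub>C R z x - A (R z x) = x" using R_props by blast
lemma R_left: "z \<in> sphere 0 1 \<Longrightarrow> R z (z *\<^sub>C x - A x) = x" using R_props by blast

definition "K z = onorm (R z)"

lemma K_bound: "z \<in> sphere 0 1 \<Longrightarrow> norm (R z x) \<le> K z * norm x"
  unfolding K_def by (rule onorm[OF R_bl])

lemma K_nonneg: "z \<in> sphere 0 1 \<Longrightarrow> 0 \<le> K z"
  unfolding K_def by (rule onorm_pos_le[OF R_bl])

lemma R_identity:
  assumes z: "z \<in> sphere 0 1" and w: "w \<in> sphere 0 1"
  shows "R z x - R w x = (w - z) *\<^sub>C R z (R w x)"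
proof -
  define y where "y = R w x"
  have x: "x = w *\<^sub>C y - A y" using R_right[OF w] y_def by simp
  have "w *\<^sub>C y - A y = (w - z) *\<^sub>C y + (z *\<^sub>C y - A y)"
    using scaleC_add_left[of "w - z" z y] by (simp add: algebra_simps)
  then have "R z x = R z ((w - z) *\<^sub>C y + (z *\<^sub>C y - A y))"
    using x by (simp only:)
  also have "\<dots> = R z ((w - z) *\<^sub>C y) + R z (z *\<^sub>C y - A y)"
    by (rule bl_add[OF R_bl[OF z]])
  also have "\<dots> = (w - z) *\<^sub>C R z y + y"
    using bclin_scaleC[OF R_bcl[OF z]] R_left[OF z] by simp
  finally show ?thesis unfolding y_def by (simp add: algebra_simps)
qed

lemma R_local:
  assumes z: "z \<in> sphere 0 1" and w: "w \<in> sphere 0 1" and small: "cmod (w - z) * K z \<le> 1/2"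
  shows "norm (R w x) \<le> 2 * K z * norm x"
    and "norm (R w x - R z x) \<le> 2 * (K z)\<^sup>2 * cmod (w - z) * norm x"
proof -
  have "R w x = R z x - (R z x - R w x)" by simp
  also have "\<dots> = R z x - (w - z) *\<^sub>C R z (R w x)" by (simp only: R_identity[OF z w])
  finally have "R w x = R z x - (w - z) *\<^sub>C R z (R w x)" .
  then have "norm (R w x) \<le> norm (R z x) + cmod (w - z) * norm (R z (R w x))"
    by (metis norm_scaleC norm_triangle_ineq4)
  also have "\<dots> \<le> K z * norm x + cmod (w - z) * (K z * norm (R w x))"
    by (intro add_mono mult_left_mono K_bound z) auto
  finally have "norm (R w x) \<le> K z * norm x + (cmod (w - z) * K z) * norm (R w x)"
    by (simp add: algebra_simps)
  moreover have "(cmod (w - z) * K z) * norm (R w x) \<le> 1/2 * norm (R w x)"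
    by (intro mult_right_mono small) auto
  ultimately show 1: "norm (R w x) \<le> 2 * K z * norm x" by simp
  have "norm (R w x - R z x) = cmod (w - z) * norm (R z (R w x))"
    using R_identity[OF z w, of x] norm_scaleC by (metis norm_minus_commute)
  also have "\<dots> \<le> cmod (w - z) * (K z * (2 * K z * norm x))"
    by (intro mult_left_mono order_trans[OF K_bound[OF z]] mult_left_mono 1 K_nonneg z) auto
  finally show "norm (R w x - R z x) \<le> 2 * (K z)\<^sup>2 * cmod (w - z) * norm x"
    by (simp add: power2_eq_square algebra_simps)
qed

lemma K_local:
  assumes z: "z \<in> sphere 0 1" and w: "w \<in> sphere 0 1" and small: "cmod (w - z) * K z \<le> 1/2"
  shows "\<bar>K w - K z\<bar> \<le> 2 * (K z)\<^sup>2 * cmod (w - z)"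
proof -
  let ?d = "2 * (K z)\<^sup>2 * cmod (w - z)"
  have "norm (R w x) \<le> (K z + ?d) * norm x" for x
    using R_local(2)[OF z w small, of x] K_bound[OF z, of x] norm_triangle_ineq2[of "R w x" "R z x"]
    by (simp add: algebra_simps)
  then have 1: "K w \<le> K z + ?d" unfolding K_def
    by (intro onorm_bound) (auto intro!: add_nonneg_nonneg K_nonneg[OF z, unfolded K_def])
  have "norm (R z x) \<le> (K w + ?d) * norm x" for x
    using R_local(2)[OF z w small, of x] K_bound[OF w, of x] norm_triangle_ineq3[of "R w x" "R z x"]
      norm_minus_commute[of "R w x" "R z x"]
    by (simp add: algebra_simps)
  then have 2: "K z \<le> K w + ?d" unfolding K_def
    by (intro onorm_bound) (auto intro!: add_nonneg_nonneg K_nonneg[OF w, unfolded K_def])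
  from 1 2 show ?thesis by linarith
qed

lemma K_cont: "continuous_on (sphere 0 1) K"
  unfolding continuous_on_iff
proof (intro ballI allI impI)
  fix z e assume z: "z \<in> sphere (0::complex) 1" and e: "(0::real) < e"
  define d where "d = min (1 / (2 * (K z + 1))) (e / (2 * (K z + 1)^2))"
  have Kz: "0 \<le> K z" using K_nonneg[OF z] .
  have d: "0 < d" using e Kz by (simp add: d_def)
  show "\<exists>d>0. \<forall>w\<in>sphere 0 1. dist w z < d \<longrightarrow> dist (K w) (K z) < e"
  proof (intro exI[of _ d] conjI ballI impI d)
    fix w assume w: "w \<in> sphere (0::complex) 1" and dw: "dist w z < d"
    have wz: "cmod (w - z) < d" using dw by (simp add: dist_norm)
    have "cmod (w - z) * K z \<le> d * (K z + 1)" using wz Kz d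
      by (intro mult_mono) auto
    also have "\<dots> \<le> 1 / (2 * (K z + 1)) * (K z + 1)"
      by (intro mult_right_mono) (auto simp: d_def Kz)
    also have "\<dots> = 1/2" using Kz by (simp add: field_simps)
    finally have small: "cmod (w - z) * K z \<le> 1/2" .
    have "dist (K w) (K z) \<le> 2 * (K z)\<^sup>2 * cmod (w - z)"
      using K_local[OF z w small] by (simp add: dist_real_def)
    also have "\<dots> \<le> 2 * (K z + 1)^2 * cmod (w - z)"
      using Kz by (intro mult_right_mono mult_left_mono power_mono) auto
    also have "\<dots> < 2 * (K z + 1)^2 * d"
      using wz Kz by (intro mult_strict_left_mono) auto
    also have "\<dots> \<le> 2 * (K z + 1)^2 * (e / (2 * (K z + 1)^2))"
      using Kz by (intro mult_left_mono) (auto simp: d_def)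
    also have "\<dots> = e" using Kz by (simp add: field_simps)
    finally show "dist (K w) (K z) < e" .
  qed
qed

lemma R_cont: "continuous_on (sphere 0 1) (\<lambda>z. R z x)"
  unfolding continuous_on_iff
proof (intro ballI allI impI)
  fix z e assume z: "z \<in> sphere (0::complex) 1" and e: "(0::real) < e"
  define d where "d = min (1 / (2 * (K z + 1))) (e / (2 * (K z + 1)^2 * (norm x + 1)))"
  have Kz: "0 \<le> K z" using K_nonneg[OF z] .
  have p1: "0 < K z + 1" using Kz by simp
  have p2: "0 < norm x + 1" using norm_ge_zero[of x] by linarith
  have "0 < 2 * (K z + 1)^2 * (norm x + 1)" using p1 p2 by simp
  then have d: "0 < d" using e p1 by (simp add: d_def)
  show "\<exists>d>0. \<forall>w\<in>sphere 0 1. dist w z < d \<longrightarrow> dist (R w x) (R z x) < e"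
  proof (intro exI[of _ d] conjI ballI impI d)
    fix w assume w: "w \<in> sphere (0::complex) 1" and dw: "dist w z < d"
    have wz: "cmod (w - z) < d" using dw by (simp add: dist_norm)
    have "cmod (w - z) * K z \<le> d * (K z + 1)" using wz Kz d
      by (intro mult_mono) auto
    also have "\<dots> \<le> 1 / (2 * (K z + 1)) * (K z + 1)"
      by (intro mult_right_mono) (auto simp: d_def Kz)
    also have "\<dots> = 1/2" using Kz by (simp add: field_simps)
    finally have small: "cmod (w - z) * K z \<le> 1/2" .
    have "dist (R w x) (R z x) \<le> 2 * (K z)\<^sup>2 * cmod (w - z) * norm x"
      using R_local(2)[OF z w small] by (simp add: dist_norm)
    also have "\<dots> \<le> 2 * (K z + 1)^2 * cmod (w - z) * (norm x + 1)"
      using Kz by (intro mult_mono power_mono) auto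
    also have "\<dots> < 2 * (K z + 1)^2 * d * (norm x + 1)"
      using wz Kz p2 by (intro mult_strict_right_mono mult_strict_left_mono) auto
    also have "\<dots> \<le> 2 * (K z + 1)^2 * (e / (2 * (K z + 1)^2 * (norm x + 1))) * (norm x + 1)"
      using Kz p2 by (intro mult_right_mono mult_left_mono) (auto simp: d_def)
    also have "\<dots> = e"
    proof -
      have "2 * (K z + 1)^2 * (norm x + 1) \<noteq> 0" using p1 p2 by simp
      then show ?thesis by (simp add: divide_simps)
    qed
    finally show "dist (R w x) (R z x) < e" .
  qed
qed

lemma K_bdd: "bdd_above (K ` sphere 0 1)"
  by (intro bounded_imp_bdd_above compact_imp_bounded compact_continuous_image K_cont compact_sphere)

lemma K_le_M1: "z \<in> sphere 0 1 \<Longrightarrow> K z \<le> M1 A"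
  unfolding M1_def K_def[symmetric] by (rule cSUP_upper[OF _ K_bdd])

lemma M1_nonneg: "0 \<le> M1 A"
proof -
  have "(1::complex) \<in> sphere 0 1" by simp
  then show ?thesis using K_le_M1 K_nonneg by (meson order_trans)
qed

lemma R_M1: "z \<in> sphere 0 1 \<Longrightarrow> norm (R z x) \<le> M1 A * norm x"
  by (meson K_bound K_le_M1 mult_right_mono norm_ge_zero order_trans)

end

lemma cc_sphere[simp]: "cc m t \<in> sphere 0 1"
  by simp

lemma cc_Suc_scaleC: "cc (m + 1) t *\<^sub>C y = cc m t *\<^sub>C (cc 1 t *\<^sub>C (y::'a::complex_hilbert))"
  by (simp add: scaleC_scaleC cc_mult)

context hyp_op begin

definition G :: "int \<Rightarrow> 'a \<Rightarrow> 'a" where "G m x = fc (\<lambda>t. R (cc 1 t) x) m"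

lemma cont_Rcc: "continuous_on S (\<lambda>t. R (cc 1 t) x)"
  by (rule continuous_on_compose2[OF R_cont continuous_on_cc]) auto

lemma int_G: "((\<lambda>t. cc m t *\<^sub>C R (cc 1 t) x) has_integral G m x) {0..1}"
  unfolding G_def fc_def
  by (intro integrable_integral integrable_continuous_real continuous_intros cont_Rcc)

lemma G_eq: "((\<lambda>t. cc m t *\<^sub>C R (cc 1 t) x) has_integral y) {0..1} \<Longrightarrow> G m x = y"
  using int_G has_integral_unique by blast

lemma G_rel1: "G (m + 1) x - A (G m x) = (if m = 0 then x else 0)"
proof -
  have b: "((\<lambda>t. A (cc m t *\<^sub>C R (cc 1 t) x)) has_integral A (G m x)) {0..1}"
    using has_integral_linear[OF int_G A_bl] by (simp add: o_def)
  have "((\<lambda>t. cc (m + 1) t *\<^sub>C R (cc 1 t) x - A (cc m t *\<^sub>C R (cc 1 t) x)) has_integral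
      (G (m + 1) x - A (G m x))) {0..1}"
    by (rule has_integral_diff[OF int_G b])
  moreover have "cc (m + 1) t *\<^sub>C R (cc 1 t) x - A (cc m t *\<^sub>C R (cc 1 t) x) = cc m t *\<^sub>C x" for t
    using R_right[OF cc_sphere[of 1 t], of x]
    by (simp add: cc_Suc_scaleC bclin_scaleC[OF A_bdd] scaleC_diff_right[symmetric])
  ultimately have "((\<lambda>t. cc m t *\<^sub>C x) has_integral (G (m + 1) x - A (G m x))) {0..1}" by simp
  then show ?thesis using cc_scaleC_integral has_integral_unique by blast
qed

lemma G_rel2: "G (m + 1) x - G m (A x) = (if m = 0 then x else 0)"
proof -
  have "((\<lambda>t. cc (m + 1) t *\<^sub>C R (cc 1 t) x - cc m t *\<^sub>C R (cc 1 t) (A x)) has_integral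
      (G (m + 1) x - G m (A x))) {0..1}"
    by (rule has_integral_diff[OF int_G int_G])
  moreover have "cc (m + 1) t *\<^sub>C R (cc 1 t) x - cc m t *\<^sub>C R (cc 1 t) (A x) = cc m t *\<^sub>C x" for t
  proof -
    have "cc (m + 1) t *\<^sub>C R (cc 1 t) x - cc m t *\<^sub>C R (cc 1 t) (A x)
        = cc m t *\<^sub>C (R (cc 1 t) (cc 1 t *\<^sub>C x) - R (cc 1 t) (A x))"
      by (simp add: cc_Suc_scaleC bclin_scaleC[OF R_bcl[OF cc_sphere]] scaleC_diff_right)
    also have "\<dots> = cc m t *\<^sub>C R (cc 1 t) (cc 1 t *\<^sub>C x - A x)"
      by (simp add: bl_diff[OF R_bl[OF cc_sphere]])
    also have "\<dots> = cc m t *\<^sub>C x" by (simp add: R_left)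
    finally show ?thesis .
  qed
  ultimately have "((\<lambda>t. cc m t *\<^sub>C x) has_integral (G (m + 1) x - G m (A x))) {0..1}" by simp
  then show ?thesis using cc_scaleC_integral has_integral_unique by blast
qed

lemma G_bound: "norm (G m x) \<le> M1 A * norm x"
proof -
  have "norm (integral {0..1} (\<lambda>t. cc m t *\<^sub>C R (cc 1 t) x)) \<le> integral {0..1} (\<lambda>t::real. M1 A * norm x)"
    by (rule Henstock_Kurzweil_Integration.integral_norm_bound_integral)
       (auto intro!: integrable_continuous_real continuous_intros cont_Rcc simp: norm_scaleC_unit R_M1)
  then show ?thesis unfolding G_def fc_def by simp
qed

lemma G_bl: "bounded_linear (G m)"
proof (rule bounded_linear_intro[where K="M1 A"])
  fix x y
  have "((\<lambda>t. cc m t *\<^sub>C R (cc 1 t) x + cc m t *\<^sub>C R (cc 1 t) y) has_integral (G m x + G m y)) {0..1}"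
    by (rule has_integral_add[OF int_G int_G])
  then show "G m (x + y) = G m x + G m y"
    by (intro G_eq) (simp add: bl_add[OF R_bl[OF cc_sphere]] scaleC_add_right)
next
  fix r x
  have "((\<lambda>t. r *\<^sub>R (cc m t *\<^sub>C R (cc 1 t) x)) has_integral (r *\<^sub>R G m x)) {0..1}"
    by (rule has_integral_cmul[OF int_G])
  then show "G m (r *\<^sub>R x) = r *\<^sub>R G m x"
    by (intro G_eq) (simp add: bl_scaleR[OF R_bl[OF cc_sphere]] scaleC_scaleR_comm)
next
  fix x show "norm (G m x) \<le> norm x * M1 A" using G_bound by (simp add: mult.commute)
qed

lemma T_fin:
  assumes S: "finite S" and N: "finite N"
  shows "(\<Sum>n\<in>N. (norm (\<Sum>k\<in>S. G (n - k) (g k)))\<^sup>2) \<le> (M1 A)\<^sup>2 * (\<Sum>k\<in>S. (norm (g k))\<^sup>2)"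
proof -
  define s where "s t = (\<Sum>k\<in>S. cc (-k) t *\<^sub>C g k)" for t
  define h where "h t = (\<Sum>k\<in>S. cc (-k) t *\<^sub>C R (cc 1 t) (g k))" for t
  have hR: "h t = R (cc 1 t) (s t)" for t
    unfolding h_def s_def bl_sum[OF R_bl[OF cc_sphere]] bclin_scaleC[OF R_bcl[OF cc_sphere]] ..
  have hc: "continuous_on {0..1} h"
    unfolding h_def by (intro continuous_intros cont_Rcc)
  have fch: "fc h n = (\<Sum>k\<in>S. G (n - k) (g k))" for n
  proof -
    have eq: "cc n t *\<^sub>C h t = (\<Sum>k\<in>S. cc (n - k) t *\<^sub>C R (cc 1 t) (g k))" for t
      unfolding h_def bl_sum[OF bounded_linear_scaleC] by (simp add: scaleC_scaleC cc_mult)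
    have "((\<lambda>t. \<Sum>k\<in>S. cc (n - k) t *\<^sub>C R (cc 1 t) (g k)) has_integral (\<Sum>k\<in>S. G (n - k) (g k))) {0..1}"
      by (intro has_integral_sum S int_G)
    then show ?thesis unfolding fc_def eq by (rule integral_unique)
  qed
  have "(\<Sum>n\<in>N. (norm (\<Sum>k\<in>S. G (n - k) (g k)))\<^sup>2) \<le> integral {0..1} (\<lambda>t. (norm (h t))\<^sup>2)"
    using bessel[OF hc N] unfolding fch .
  also have "\<dots> \<le> integral {0..1} (\<lambda>t. (M1 A)\<^sup>2 * (norm (s t))\<^sup>2)"
  proof (rule integral_le)
    show "(\<lambda>t. (norm (h t))\<^sup>2) integrable_on {0..1}"
      by (intro integrable_continuous_real continuous_intros hc)
    show "(\<lambda>t. (M1 A)\<^sup>2 * (norm (s t))\<^sup>2) integrable_on {0..1}"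
      using has_integral_mult_right[OF parseval_trig[OF S, of g], of "(M1 A)\<^sup>2"]
      unfolding s_def by blast
    fix t
    have "norm (h t) \<le> M1 A * norm (s t)" unfolding hR by (rule R_M1[OF cc_sphere])
    then have "(norm (h t))\<^sup>2 \<le> (M1 A * norm (s t))\<^sup>2" by (intro power_mono) auto
    then show "(norm (h t))\<^sup>2 \<le> (M1 A)\<^sup>2 * (norm (s t))\<^sup>2" by (simp add: power_mult_distrib)
  qed
  also have "\<dots> = (M1 A)\<^sup>2 * (\<Sum>k\<in>S. (norm (g k))\<^sup>2)"
    using has_integral_mult_right[OF parseval_trig[OF S, of g], of "(M1 A)\<^sup>2"]
    unfolding s_def by (rule integral_unique)
  finally show ?thesis .
qed

end

lemma has_sum_diff':
  fixes f g :: "'i \<Rightarrow> 'b::{topological_ab_group_add}"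
  assumes "(f has_sum a) A" "(g has_sum b) A"
  shows "((\<lambda>x. f x - g x) has_sum (a - b)) A"
proof -
  have "((\<lambda>x. - g x) has_sum - b) A" by (simp add: has_sum_uminus assms(2))
  from has_sum_add[OF assms(1) this] show ?thesis by simp
qed

lemma summable_dominated:
  fixes f :: "'i \<Rightarrow> 'b::banach" and h :: "'i \<Rightarrow> real"
  assumes hnn: "\<And>x. 0 \<le> h x" and hs: "h summable_on A" and C: "0 \<le> C"
    and bnd: "\<And>F. finite F \<Longrightarrow> F \<subseteq> A \<Longrightarrow> (norm (sum f F))\<^sup>2 \<le> C * sum h F"
  shows "f summable_on A"
proof -
  from hs obtain L where lim: "(sum h \<longlongrightarrow> L) (finite_subsets_at_top A)"
    unfolding has_sum_def summable_on_def by blast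
  have "\<exists>P. eventually P (finite_subsets_at_top A) \<and>
              (\<forall>F F'. P F \<and> P F' \<longrightarrow> dist (sum f F) (sum f F') < e)" if "e>0" for e
  proof -
    define d P where "d = e\<^sup>2 / (16 * (C + 1))" and "P F \<longleftrightarrow> finite F \<and> F \<subseteq> A \<and> dist (sum h F) L < d" for F
    have "0 < d" using that C by (simp add: d_def)
    have ev_P: "eventually P (finite_subsets_at_top A)"
      using lim
      by (auto simp add: P_def[abs_def] \<open>0 < d\<close> eventually_conj_iff eventually_finite_subsets_at_top_weakI tendsto_iff)
    moreover have "dist (sum f F1) (sum f F2) < e" if "P F1" and "P F2" for F1 F2
    proof -
      from ev_P
      obtain F' where "finite F'" and "F' \<subseteq> A" and P_sup_F': "finite F \<and> F \<supseteq> F' \<and> F \<subseteq> A \<Longrightarrow> P F" for F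
        by atomize_elim (simp add: eventually_finite_subsets_at_top)
      define F where "F = F' \<union> F1 \<union> F2"
      have "finite F" and "F \<subseteq> A"
        using F_def P_def[abs_def] that \<open>finite F'\<close> \<open>F' \<subseteq> A\<close> by auto
      have dist_F: "dist (sum h F) L < d"
        by (metis F_def \<open>F \<subseteq> A\<close> P_def P_sup_F' \<open>finite F\<close> le_supE order_refl)
      have dist_F_subset: "dist (sum f F) (sum f F0) < e / 2" if F0: "F0 \<subseteq> F" "P F0" for F0
      proof -
        have fin: "finite (F - F0)" "F - F0 \<subseteq> A" using \<open>finite F\<close> \<open>F \<subseteq> A\<close> by auto
        have "dist (sum f F) (sum f F0) = norm (sum f (F - F0))"
          unfolding dist_norm using \<open>finite F\<close> F0 by (subst sum_diff) auto
        moreover have "sum h (F - F0) = sum h F - sum h F0"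
          using \<open>finite F\<close> F0 by (subst sum_diff) auto
        moreover have "sum h F - sum h F0 < 2 * d"
          using dist_F F0 unfolding P_def dist_real_def by linarith
        ultimately have "(dist (sum f F) (sum f F0))\<^sup>2 \<le> C * (2 * d)"
          using bnd[OF fin] C by (smt (verit) mult_left_mono)
        also have "\<dots> \<le> (C + 1) * (2 * d)" using \<open>0 < d\<close> by simp
        also have "\<dots> = e\<^sup>2 / 8" using C by (simp add: d_def field_simps)
        also have "\<dots> < (e / 2)\<^sup>2" using \<open>e > 0\<close> by (simp add: power2_eq_square field_simps)
        finally have "(dist (sum f F) (sum f F0))\<^sup>2 < (e / 2)\<^sup>2" .
        then show ?thesis by (rule power_less_imp_less_base) (use \<open>e > 0\<close> in simp)
      qed
      have "dist (sum f F1) (sum f F2) \<le> dist (sum f F) (sum f F1) + dist (sum f F) (sum f F2)"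
        by (rule dist_triangle3)
      also have "\<dots> < e / 2 + e / 2"
        by (intro add_strict_mono dist_F_subset that) (auto simp: F_def)
      finally show ?thesis by simp
    qed
    ultimately show ?thesis by blast
  qed
  then have "cauchy_filter (filtermap (sum f) (finite_subsets_at_top A))"
    by (simp add: cauchy_filter_metric_filtermap)
  moreover have "complete (UNIV::'b set)"
    by (meson Cauchy_convergent UNIV_I complete_def convergent_def)
  ultimately obtain L' where "(sum f \<longlongrightarrow> L') (finite_subsets_at_top A)"
    using complete_uniform[where S=UNIV] by (force simp add: filterlim_def)
  then show ?thesis
    using summable_on_def has_sum_def by blast
qed

lemma l2_summable: "l2seq u \<Longrightarrow> (\<lambda>n. (norm (u n))\<^sup>2) summable_on UNIV"
  by (simp add: l2seq_def)

lemma l2_sum_le: "l2seq u \<Longrightarrow> finite F \<Longrightarrow> (\<Sum>n\<in>F. (norm (u n))\<^sup>2) \<le> (\<Sum>\<^sub>\<infinity>n. (norm (u n))\<^sup>2)"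
  by (rule finite_sum_le_infsum) (auto simp: l2seq_def)

lemma l2_comparison:
  assumes "l2seq v" "\<And>n. norm (u n) \<le> c * norm (v n)"
  shows "l2seq u"
proof -
  have "(\<lambda>n. c\<^sup>2 * (norm (v n))\<^sup>2) summable_on UNIV"
    using assms(1) by (intro summable_on_cmult_right) (simp add: l2seq_def)
  moreover have "(norm (u n))\<^sup>2 \<le> c\<^sup>2 * (norm (v n))\<^sup>2" for n
  proof -
    have "(norm (u n))\<^sup>2 \<le> (c * norm (v n))\<^sup>2" using assms(2)[of n] by (intro power_mono) auto
    then show ?thesis by (simp add: power_mult_distrib)
  qed
  ultimately show ?thesis unfolding l2seq_def
    by (rule summable_on_comparison_test) auto
qed

lemma l2_add:
  assumes "l2seq (v::int \<Rightarrow> 'b::real_normed_vector)" "l2seq w"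
  shows "l2seq (\<lambda>n. v n + w n)" "l2seq (\<lambda>n. v n - w n)"
proof -
  have s: "(\<lambda>n. 2 * (norm (v n))\<^sup>2 + 2 * (norm (w n))\<^sup>2) summable_on UNIV"
    using assms by (intro summable_on_add summable_on_cmult_right) (auto simp: l2seq_def)
  have b: "(norm a)\<^sup>2 \<le> 2 * (norm x)\<^sup>2 + 2 * (norm y)\<^sup>2" if "norm a \<le> norm x + norm y" for a x y :: 'b
  proof -
    have "(norm a)\<^sup>2 \<le> (norm x + norm y)\<^sup>2" using that by (intro power_mono) auto
    also have "\<dots> \<le> 2 * (norm x)\<^sup>2 + 2 * (norm y)\<^sup>2"
      by (smt (verit) sum_squares_bound power2_sum zero_le_power2 power2_diff)
    finally show ?thesis .
  qed
  show "l2seq (\<lambda>n. v n + w n)" unfolding l2seq_def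
    by (rule summable_on_comparison_test[OF s]) (auto intro!: b norm_triangle_ineq)
  show "l2seq (\<lambda>n. v n - w n)" unfolding l2seq_def
    by (rule summable_on_comparison_test[OF s]) (auto intro!: b norm_triangle_ineq4)
qed

lemma nat_mult_bound_zero:
  fixes a B :: real
  assumes "\<And>N::nat. real N * a \<le> B" "0 \<le> a"
  shows "a = 0"
proof (rule ccontr)
  assume "a \<noteq> 0"
  then have "a > 0" using assms(2) by simp
  obtain N :: nat where "B / a < real N" using reals_Archimedean2 by blast
  then have "B < real N * a" using \<open>a > 0\<close> by (simp add: field_simps)
  with assms(1)[of N] show False by simp
qed

context hyp_op begin

definition T :: "(int \<Rightarrow> 'a) \<Rightarrow> int \<Rightarrow> 'a" where
  "T g n = (\<Sum>\<^sub>\<infinity>k. G (n - k) (g k))"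

lemma T_summable:
  assumes "l2seq g"
  shows "(\<lambda>k. G (n - k) (g k)) summable_on B"
proof -
  have "(\<lambda>k. G (n - k) (g k)) summable_on UNIV"
  proof (rule summable_dominated[where h="\<lambda>k. (norm (g k))\<^sup>2" and C="(M1 A)\<^sup>2"])
    show "(\<lambda>k. (norm (g k))\<^sup>2) summable_on UNIV" using assms by (simp add: l2seq_def)
    fix F :: "int set" assume "finite F"
    then show "(norm (sum (\<lambda>k. G (n - k) (g k)) F))\<^sup>2 \<le> (M1 A)\<^sup>2 * (\<Sum>k\<in>F. (norm (g k))\<^sup>2)"
      using T_fin[of F "{n}" g] by simp
  qed auto
  then show ?thesis by (rule summable_on_subset_banach) auto
qed

lemma T_fin_bound:
  assumes g: "l2seq g" and N: "finite N"
  shows "(\<Sum>n\<in>N. (norm (T g n))\<^sup>2) \<le> (M1 A)\<^sup>2 * (\<Sum>\<^sub>\<infinity>k. (norm (g k))\<^sup>2)"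
proof (rule tendsto_upperbound)
  show "((\<lambda>F. \<Sum>n\<in>N. (norm (\<Sum>k\<in>F. G (n - k) (g k)))\<^sup>2) \<longlongrightarrow> (\<Sum>n\<in>N. (norm (T g n))\<^sup>2)) (finite_subsets_at_top UNIV)"
    unfolding T_def
    by (intro tendsto_sum tendsto_power tendsto_norm infsum_tendsto T_summable g)
  show "\<forall>\<^sub>F F in finite_subsets_at_top UNIV. (\<Sum>n\<in>N. (norm (\<Sum>k\<in>F. G (n - k) (g k)))\<^sup>2) \<le> (M1 A)\<^sup>2 * (\<Sum>\<^sub>\<infinity>k. (norm (g k))\<^sup>2)"
  proof (rule eventually_finite_subsets_at_top_weakI)
    fix F :: "int set" assume F: "finite F"
    have "(\<Sum>n\<in>N. (norm (\<Sum>k\<in>F. G (n - k) (g k)))\<^sup>2) \<le> (M1 A)\<^sup>2 * (\<Sum>k\<in>F. (norm (g k))\<^sup>2)"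
      by (rule T_fin[OF F N])
    also have "\<dots> \<le> (M1 A)\<^sup>2 * (\<Sum>\<^sub>\<infinity>k. (norm (g k))\<^sup>2)"
      by (intro mult_left_mono l2_sum_le g F) auto
    finally show "(\<Sum>n\<in>N. (norm (\<Sum>k\<in>F. G (n - k) (g k)))\<^sup>2) \<le> (M1 A)\<^sup>2 * (\<Sum>\<^sub>\<infinity>k. (norm (g k))\<^sup>2)" .
  qed
qed (simp add: finite_subsets_at_top_neq_bot)

lemma T_l2:
  assumes g: "l2seq g"
  shows "l2seq (T g)" "(\<Sum>\<^sub>\<infinity>n. (norm (T g n))\<^sup>2) \<le> (M1 A)\<^sup>2 * (\<Sum>\<^sub>\<infinity>k. (norm (g k))\<^sup>2)"
proof -
  show l: "l2seq (T g)" unfolding l2seq_def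
    by (rule nonneg_bdd_above_summable_on) (auto intro!: bdd_aboveI2 T_fin_bound[OF g])
  show "(\<Sum>\<^sub>\<infinity>n. (norm (T g n))\<^sup>2) \<le> (M1 A)\<^sup>2 * (\<Sum>\<^sub>\<infinity>k. (norm (g k))\<^sup>2)"
    using l unfolding l2seq_def by (rule infsum_le_finite_sums) (rule T_fin_bound[OF g])
qed

lemma T_eq:
  assumes g: "l2seq g"
  shows "T g (n + 1) - A (T g n) = g n"
proof -
  have a: "((\<lambda>k. G (n + 1 - k) (g k)) has_sum T g (n + 1)) UNIV"
    unfolding T_def by (rule has_sum_infsum[OF T_summable[OF g]])
  have b: "((\<lambda>k. A (G (n - k) (g k))) has_sum A (T g n)) UNIV"
    unfolding T_def using has_sum_bounded_linear[OF A_bl has_sum_infsum[OF T_summable[OF g]]] .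
  have "((\<lambda>k. G (n + 1 - k) (g k) - A (G (n - k) (g k))) has_sum (T g (n + 1) - A (T g n))) UNIV"
    by (rule has_sum_diff'[OF a b])
  moreover have "G (n + 1 - k) (g k) - A (G (n - k) (g k)) = (if k = n then g n else 0)" for k
    using G_rel1[of "n - k" "g k"] by (simp add: algebra_simps)
  ultimately have "((\<lambda>k. if k = n then g n else 0) has_sum (T g (n + 1) - A (T g n))) UNIV"
    by simp
  moreover have "((\<lambda>k. if k = n then g n else 0) has_sum g n) UNIV"
    by (rule has_sum_finiteI[where A="{n}", THEN has_sum_cong_neutral[THEN iffD1, rotated 3]]) auto
  ultimately show ?thesis using has_sum_unique by blast
qed

lemma homog_zero:
  assumes v: "l2seq v" and hv: "\<And>n. v (n + 1) = A (v n)"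
  shows "v n = 0"
proof -
  define c where "c k = G (n - k + 1) (v k)" for k
  have step: "c (k + 1) = c k - (if k = n then v k else 0)" for k
  proof -
    have "c (k + 1) = G (n - k) (A (v k))" unfolding c_def hv by simp
    also have "\<dots> = G (n - k + 1) (v k) - (if n - k = 0 then v k else 0)"
      using G_rel2[of "n - k" "v k"] by (simp add: algebra_simps)
    finally show ?thesis unfolding c_def by simp
  qed
  have down: "c (n - int j) = c n" for j :: nat
  proof (induct j)
    case (Suc j)
    have "c (n - int j) = c ((n - int (Suc j)) + 1)" by simp
    also have "\<dots> = c (n - int (Suc j))" using step[of "n - int (Suc j)"] by simp
    finally show ?case using Suc by simp
  qed simp
  have up: "c (n + 1 + int j) = c (n + 1)" for j :: nat
  proof (induct j)
    case (Suc j)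
    have "c (n + 1 + int (Suc j)) = c ((n + 1 + int j) + 1)" by (simp add: algebra_simps)
    also have "\<dots> = c (n + 1 + int j)" using step[of "n + 1 + int j"] by simp
    finally show ?case using Suc by simp
  qed simp
  have cb: "norm (c k) \<le> M1 A * norm (v k)" for k unfolding c_def by (rule G_bound)
  have csq: "(norm (c k))\<^sup>2 \<le> (M1 A)\<^sup>2 * (norm (v k))\<^sup>2" for k
    using cb[of k] by (metis norm_ge_zero power_mono power_mult_distrib)
  define I where "I = (\<Sum>\<^sub>\<infinity>k. (norm (v k))\<^sup>2)"
  have sum_le: "(\<Sum>j<N. (norm (v (f j)))\<^sup>2) \<le> I" if "inj f" for f :: "nat \<Rightarrow> int" and N
  proof -
    have "(\<Sum>j<N. (norm (v (f j)))\<^sup>2) = (\<Sum>k\<in>f ` {..<N}. (norm (v k))\<^sup>2)"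
      using that by (simp add: sum.reindex inj_on_def inj_def)
    also have "\<dots> \<le> I" unfolding I_def by (intro l2_sum_le v) auto
    finally show ?thesis .
  qed
  have c0: "c n = 0"
  proof -
    have "real N * (norm (c n))\<^sup>2 \<le> (M1 A)\<^sup>2 * I" for N
    proof -
      have "real N * (norm (c n))\<^sup>2 = (\<Sum>j<N. (norm (c (n - int j)))\<^sup>2)" by (simp add: down)
      also have "\<dots> \<le> (\<Sum>j<N. (M1 A)\<^sup>2 * (norm (v (n - int j)))\<^sup>2)" by (intro sum_mono csq)
      also have "\<dots> \<le> (M1 A)\<^sup>2 * I" unfolding sum_distrib_left[symmetric]
        by (intro mult_left_mono sum_le) (auto simp: inj_def)
      finally show ?thesis .
    qed
    then have "(norm (c n))\<^sup>2 = 0" by (intro nat_mult_bound_zero) auto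
    then show ?thesis by simp
  qed
  have c1: "c (n + 1) = 0"
  proof -
    have "real N * (norm (c (n + 1)))\<^sup>2 \<le> (M1 A)\<^sup>2 * I" for N
    proof -
      have "real N * (norm (c (n + 1)))\<^sup>2 = (\<Sum>j<N. (norm (c (n + 1 + int j)))\<^sup>2)" by (simp add: up)
      also have "\<dots> \<le> (\<Sum>j<N. (M1 A)\<^sup>2 * (norm (v (n + 1 + int j)))\<^sup>2)" by (intro sum_mono csq)
      also have "\<dots> \<le> (M1 A)\<^sup>2 * I" unfolding sum_distrib_left[symmetric]
        by (intro mult_left_mono sum_le) (auto simp: inj_def)
      finally show ?thesis .
    qed
    then have "(norm (c (n + 1)))\<^sup>2 = 0" by (intro nat_mult_bound_zero) auto
    then show ?thesis by simp
  qed
  show ?thesis using step[of n] c0 c1 by simp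
qed

lemma same_sol:
  assumes "l2seq v" "l2seq w" "\<And>n. v (n + 1) - A (v n) = w (n + 1) - A (w n)"
  shows "v = w"
proof -
  have "(\<lambda>n. v n - w n) n = 0" for n
  proof (rule homog_zero[where v="\<lambda>n. v n - w n"])
    show "l2seq (\<lambda>n. v n - w n)" using l2_add assms by blast
    fix n show "v (n + 1) - w (n + 1) = A (v n - w n)"
      using assms(3)[of n] by (simp add: bl_diff[OF A_bl] algebra_simps)
  qed
  then show ?thesis by auto
qed

lemma shift_minus_inv_T:
  assumes g: "l2seq g"
  shows "shift_minus_inv A g = T g"
  unfolding shift_minus_inv_def
proof (rule the_equality)
  show "l2seq (T g) \<and> (\<forall>n. T g (n + 1) - A (T g n) = g n)" using T_l2[OF g] T_eq[OF g] by blast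
  fix v assume v: "l2seq v \<and> (\<forall>n. v (n + 1) - A (v n) = g n)"
  show "v = T g" by (rule same_sol) (use v T_l2[OF g] T_eq[OF g] in auto)
qed

end

lemma cc1_exp: "exp (2 * complex_of_real pi * \<i> * complex_of_real t) = cc 1 t"
  by (simp add: cc_def cis_conv_exp algebra_simps)

context hyp_op begin

lemma P_G1: "riesz_P A x = G 1 x"
proof -
  have eq: "vector_derivative (circlepath 0 1) (at t within {0..1}) *\<^sub>C R (circlepath 0 1 t) x
      = (2 * complex_of_real pi * \<i>) *\<^sub>C (cc 1 t *\<^sub>C R (cc 1 t) x)" if "t \<in> {0..1}" for t
  proof -
    have c: "circlepath 0 1 t = cc 1 t" by (simp add: circlepath cc1_exp)
    show ?thesis using vector_derivative_circlepath01[of t 0 1] that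
      by (simp add: c cc1_exp scaleC_scaleC)
  qed
  have "((\<lambda>t. (2 * complex_of_real pi * \<i>) *\<^sub>C (cc 1 t *\<^sub>C R (cc 1 t) x)) has_integral
      (2 * complex_of_real pi * \<i>) *\<^sub>C G 1 x) {0..1}"
    using has_integral_linear[OF int_G bounded_linear_scaleC] by (simp add: o_def)
  then have "integral {0..1} (\<lambda>t. vector_derivative (circlepath 0 1) (at t within {0..1}) *\<^sub>C R (circlepath 0 1 t) x)
      = (2 * complex_of_real pi * \<i>) *\<^sub>C G 1 x"
    using eq by (subst integral_cong[OF eq]) (auto intro: integral_unique)
  then show ?thesis unfolding riesz_P_def by (simp add: scaleC_scaleC)
qed

lemma A_G: "A (G m x) = G m (A x)"
  using G_rel1[of m x] G_rel2[of m x] by (simp add: algebra_simps)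

lemma P_bl: "bounded_linear (riesz_P A)"
proof -
  have "riesz_P A = G 1" using P_G1 by auto
  then show ?thesis using G_bl by simp
qed

lemma G_seq_l2: "l2seq (\<lambda>m. G m x)"
  unfolding l2seq_def
proof (rule nonneg_bdd_above_summable_on)
  show "bdd_above (sum (\<lambda>m. (norm (G m x))\<^sup>2) ` {F. F \<subseteq> UNIV \<and> finite F})"
  proof (rule bdd_aboveI2)
    fix F :: "int set" assume "F \<in> {F. F \<subseteq> UNIV \<and> finite F}"
    then have "finite F" by simp
    then show "(\<Sum>m\<in>F. (norm (G m x))\<^sup>2) \<le> (M1 A)\<^sup>2 * (\<Sum>k\<in>{0}. (norm x)\<^sup>2)"
      using T_fin[of "{0}" F "\<lambda>_. x"] by simp
  qed
qed simp

lemma G_P: "G n (riesz_P A x) = (if 1 \<le> n then G n x else 0)"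
proof -
  have "(\<lambda>n. G n (riesz_P A x)) = (\<lambda>n. if 1 \<le> n then G n x else 0)"
  proof (rule same_sol)
    show "l2seq (\<lambda>n. G n (riesz_P A x))" by (rule G_seq_l2)
    show "l2seq (\<lambda>n. if 1 \<le> n then G n x else 0)"
      by (rule l2_comparison[OF G_seq_l2, of _ 1 x]) auto
    fix n :: int
    have "G (n + 1) (riesz_P A x) - A (G n (riesz_P A x)) = (if n = 0 then riesz_P A x else 0)"
      by (rule G_rel1)
    also have "\<dots> = (if 1 \<le> n + 1 then G (n + 1) x else 0) - A (if 1 \<le> n then G n x else 0)"
      using G_rel1[of n x] by (auto simp: bl_zero[OF A_bl] P_G1)
    finally show "G (n + 1) (riesz_P A x) - A (G n (riesz_P A x)) =
      (if 1 \<le> n + 1 then G (n + 1) x else 0) - A (if 1 \<le> n then G n x else 0)" .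
  qed
  then show ?thesis by meson
qed

lemma AP: "A (riesz_P A y) = riesz_P A (A y)"
  unfolding P_G1 by (rule A_G)

lemma P_G: "riesz_P A (G n x) = G n (riesz_P A x)"
proof -
  have "(\<lambda>n. riesz_P A (G n x)) = (\<lambda>n. G n (riesz_P A x))"
  proof (rule same_sol)
    show "l2seq (\<lambda>n. G n (riesz_P A x))" by (rule G_seq_l2)
    show "l2seq (\<lambda>n. riesz_P A (G n x))"
      by (rule l2_comparison[OF G_seq_l2, of _ "M1 A" x]) (simp add: P_G1 G_bound)
    fix n :: int
    have "riesz_P A (G (n + 1) x) - A (riesz_P A (G n x)) = riesz_P A (G (n + 1) x - A (G n x))"
      by (simp add: AP bl_diff[OF P_bl])
    also have "\<dots> = (if n = 0 then riesz_P A x else 0)"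
      by (simp add: G_rel1 bl_zero[OF P_bl])
    also have "\<dots> = G (n + 1) (riesz_P A x) - A (G n (riesz_P A x))"
      by (rule G_rel1[symmetric])
    finally show "riesz_P A (G (n + 1) x) - A (riesz_P A (G n x)) = G (n + 1) (riesz_P A x) - A (G n (riesz_P A x))" .
  qed
  then show ?thesis by meson
qed

lemma PP: "riesz_P A (riesz_P A x) = riesz_P A x"
  using G_P[of 1 x] by (simp add: P_G1[symmetric])

lemma P_Gpos: "1 \<le> n \<Longrightarrow> riesz_P A (G n x) = G n x"
  by (simp add: P_G G_P)

lemma P_Gnonpos: "n \<le> 0 \<Longrightarrow> riesz_P A (G n x) = 0"
  by (simp add: P_G G_P)

lemma G_P_nonpos: "n \<le> 0 \<Longrightarrow> G n (riesz_P A x) = 0"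
  by (simp add: G_P)

lemma Q_Gpos: "1 \<le> n \<Longrightarrow> riesz_Q A (G n x) = 0"
  by (simp add: riesz_Q_def P_Gpos)

lemma Q_Gnonpos: "n \<le> 0 \<Longrightarrow> riesz_Q A (G n x) = G n x"
  by (simp add: riesz_Q_def P_Gnonpos)

lemma G_Q_nonpos: "n \<le> 0 \<Longrightarrow> G n (riesz_Q A x) = G n x"
  by (simp add: riesz_Q_def bl_diff[OF G_bl] G_P_nonpos)

lemma P_Q: "riesz_P A (riesz_Q A y) = 0"
  by (simp add: riesz_Q_def bl_diff[OF P_bl] PP)

lemma PAP: "PAP_pow A m (riesz_P A y) = G (int m + 1) y"
proof (induct m)
  case 0
  then show ?case by (simp add: PAP_pow_def P_G1)
next
  case (Suc m)
  have "PAP_pow A (Suc m) (riesz_P A y) = riesz_P A (A (riesz_P A (PAP_pow A m (riesz_P A y))))"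
    by (simp add: PAP_pow_def)
  also have "\<dots> = riesz_P A (A (G (int m + 1) y))" using Suc by (simp add: P_Gpos)
  also have "A (G (int m + 1) y) = G (int m + 1 + 1) y" using G_rel1[of "int m + 1" y] by simp
  also have "riesz_P A (G (int m + 1 + 1) y) = G (int m + 1 + 1) y" by (rule P_Gpos) simp
  finally show ?case by simp
qed

lemma Pzero_inv: "riesz_P A z = 0 \<Longrightarrow> z = - G 0 (A z)"
  using G_rel1[of 0 z] by (simp add: P_G1[symmetric] A_G)

lemma G_nonpos_rangeQ: "n \<le> 0 \<Longrightarrow> - G n z \<in> range (riesz_Q A)"
proof -
  assume n: "n \<le> 0"
  have "riesz_Q A (- G n z) = - G n z"
    by (simp add: riesz_Q_def bl_minus[OF P_bl] P_Gnonpos[OF n])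
  then show ?thesis by (metis rangeI)
qed

lemma QA_inv_eq:
  assumes y: "y \<in> range (riesz_Q A)"
  shows "QA_inv A y = - G 0 y"
  unfolding QA_inv_def
proof (rule the_equality)
  have Py: "riesz_P A y = 0" using y P_Q by auto
  show "- G 0 y \<in> range (riesz_Q A) \<and> A (- G 0 y) = y"
  proof
    show "- G 0 y \<in> range (riesz_Q A)" by (rule G_nonpos_rangeQ) simp
    have "G 1 y - A (G 0 y) = y" using G_rel1[of 0 y] by simp
    then show "A (- G 0 y) = y" using Py by (simp add: bl_minus[OF A_bl] P_G1)
  qed
  fix x assume x: "x \<in> range (riesz_Q A) \<and> A x = y"
  then have "riesz_P A x = 0" using P_Q by auto
  then show "x = - G 0 y" using Pzero_inv x by auto
qed

lemma negpow: "QAQ_negpow A (Suc j) (riesz_Q A y) = - G (- int j) y"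
proof (induct j)
  case 0
  have "QAQ_negpow A (Suc 0) (riesz_Q A y) = QA_inv A (riesz_Q A y)" by (simp add: QAQ_negpow_def)
  also have "\<dots> = - G 0 (riesz_Q A y)" by (rule QA_inv_eq) simp
  also have "\<dots> = - G 0 y" by (simp add: G_Q_nonpos)
  finally show ?case by simp
next
  case (Suc j)
  have "QAQ_negpow A (Suc (Suc j)) (riesz_Q A y) = QA_inv A (QAQ_negpow A (Suc j) (riesz_Q A y))"
    by (simp add: QAQ_negpow_def)
  also have "\<dots> = QA_inv A (- G (- int j) y)" using Suc by simp
  also have "\<dots> = - G 0 (- G (- int j) y)" by (rule QA_inv_eq, rule G_nonpos_rangeQ) simp
  also have "\<dots> = G 0 (G (- int j) y)" by (simp add: bl_minus[OF G_bl])
  also have "G (- int j) y = A (G (- int j - 1) y)"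
    using G_rel1[of "- int j - 1" y] by simp
  also have "G 0 (A (G (- int j - 1) y)) = - G (- int j - 1) y"
  proof -
    have "G (- int j - 1) y = - G 0 (A (G (- int j - 1) y))"
      by (rule Pzero_inv[OF P_Gnonpos]) simp
    then show ?thesis by (metis minus_minus)
  qed
  also have "- int j - 1 = - int (Suc j)" by simp
  finally show ?case .
qed

end

lemma has_sum_single':
  assumes "a \<in> S" "\<And>k. k \<in> S \<Longrightarrow> k \<noteq> a \<Longrightarrow> f k = 0"
  shows "(f has_sum f a) S"
proof -
  have "(f has_sum sum f {a}) {a}" by (rule has_sum_finite) simp
  then show ?thesis
    using has_sum_cong_neutral[where S="{a}" and T=S and f=f and g=f] assms by auto
qed

lemma delta_l2: "l2seq (delta_m1 (\<xi>::'a::real_normed_vector))"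
  unfolding l2seq_def
  by (rule finite_nonzero_values_imp_summable_on, rule finite_subset[of _ "{-1}"]) (auto simp: delta_m1_def)

context hyp_op begin

lemma Q_bl: "bounded_linear (riesz_Q A)"
proof -
  have "riesz_Q A = (\<lambda>x. x - riesz_P A x)" by (auto simp: riesz_Q_def)
  then show ?thesis using bounded_linear_sub[OF bounded_linear_ident P_bl] by simp
qed


lemma P_formula:
  assumes f: "l2seq f" and xi: "\<xi> \<in> range (riesz_P A)" and n: "0 \<le> n"
  shows "riesz_P A (T (\<lambda>k. f k + delta_m1 \<xi> k) n) = PAP_pow A (nat n) \<xi>
            + (\<Sum>\<^sub>\<infinity>k\<in>{..<n}. PAP_pow A (nat (n - 1 - k)) (riesz_P A (f k)))"
proof -
  define g where "g k = f k + delta_m1 \<xi> k" for k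
  have g: "l2seq g" unfolding g_def by (rule l2_add(1)[OF f delta_l2])
  have hs: "((\<lambda>k. riesz_P A (G (n - k) (g k))) has_sum riesz_P A (T g n)) UNIV"
    unfolding T_def by (rule has_sum_bounded_linear[OF P_bl has_sum_infsum[OF T_summable[OF g]]])
  have s1: "(\<lambda>k. riesz_P A (G (n - k) (g k))) summable_on {..<n}"
    using summable_on_bounded_linear[OF P_bl T_summable[OF g]] .
  have s2: "(\<lambda>k. riesz_P A (G (n - k) (g k))) summable_on {n..}"
    using summable_on_bounded_linear[OF P_bl T_summable[OF g]] .
  have "riesz_P A (T g n) = (\<Sum>\<^sub>\<infinity>k. riesz_P A (G (n - k) (g k)))"
    using hs by (simp add: infsumI)
  also have "\<dots> = (\<Sum>\<^sub>\<infinity>k\<in>{..<n} \<union> {n..}. riesz_P A (G (n - k) (g k)))"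
    by (rule arg_cong[where f="infsum _"]) auto
  also have "\<dots> = (\<Sum>\<^sub>\<infinity>k\<in>{..<n}. riesz_P A (G (n - k) (g k))) + (\<Sum>\<^sub>\<infinity>k\<in>{n..}. riesz_P A (G (n - k) (g k)))"
    by (rule infsum_Un_disjoint[OF s1 s2]) auto
  also have "(\<Sum>\<^sub>\<infinity>k\<in>{n..}. riesz_P A (G (n - k) (g k))) = 0"
    by (rule infsum_0) (auto intro!: P_Gnonpos)
  also have "(\<Sum>\<^sub>\<infinity>k\<in>{..<n}. riesz_P A (G (n - k) (g k))) = (\<Sum>\<^sub>\<infinity>k\<in>{..<n}. G (n - k) (f k) + G (n - k) (delta_m1 \<xi> k))"
  proof (rule infsum_cong)
    fix k assume "k \<in> {..<n}"
    then have "riesz_P A (G (n - k) (g k)) = G (n - k) (g k)" by (intro P_Gpos) auto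
    then show "riesz_P A (G (n - k) (g k)) = G (n - k) (f k) + G (n - k) (delta_m1 \<xi> k)"
      by (simp add: g_def bl_add[OF G_bl])
  qed
  also have "\<dots> = (\<Sum>\<^sub>\<infinity>k\<in>{..<n}. G (n - k) (f k)) + (\<Sum>\<^sub>\<infinity>k\<in>{..<n}. G (n - k) (delta_m1 \<xi> k))"
  proof (rule infsum_add)
    show "(\<lambda>k. G (n - k) (f k)) summable_on {..<n}" by (rule T_summable[OF f])
    show "(\<lambda>k. G (n - k) (delta_m1 \<xi> k)) summable_on {..<n}" by (rule T_summable[OF delta_l2])
  qed
  also have "(\<Sum>\<^sub>\<infinity>k\<in>{..<n}. G (n - k) (delta_m1 \<xi> k)) = G (n + 1) \<xi>"
  proof -
    have "((\<lambda>k. G (n - k) (delta_m1 \<xi> k)) has_sum G (n - (-1)) (delta_m1 \<xi> (-1))) {..<n}"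
      by (rule has_sum_single') (use n in \<open>auto simp: delta_m1_def bl_zero[OF G_bl]\<close>)
    then show ?thesis by (simp add: infsumI delta_m1_def)
  qed
  also have "G (n + 1) \<xi> = PAP_pow A (nat n) \<xi>"
  proof -
    have "\<xi> = riesz_P A \<xi>" using xi PP by auto
    then have "PAP_pow A (nat n) \<xi> = G (int (nat n) + 1) \<xi>" using PAP[of "nat n" \<xi>] by simp
    then show ?thesis using n by simp
  qed
  also have "(\<Sum>\<^sub>\<infinity>k\<in>{..<n}. G (n - k) (f k)) = (\<Sum>\<^sub>\<infinity>k\<in>{..<n}. PAP_pow A (nat (n - 1 - k)) (riesz_P A (f k)))"
  proof (rule infsum_cong)
    fix k assume "k \<in> {..<n}"
    then have "int (nat (n - 1 - k)) + 1 = n - k" by simp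
    then show "G (n - k) (f k) = PAP_pow A (nat (n - 1 - k)) (riesz_P A (f k))"
      using PAP[of "nat (n - 1 - k)" "f k"] by simp
  qed
  finally show ?thesis unfolding g_def by simp
qed

lemma Q_formula:
  assumes f: "l2seq f" and n: "0 \<le> n"
  shows "riesz_Q A (T (\<lambda>k. f k + delta_m1 \<xi> k) n) =
           - (\<Sum>\<^sub>\<infinity>k\<in>{n..}. QAQ_negpow A (nat (k + 1 - n)) (riesz_Q A (f k)))"
proof -
  define g where "g k = f k + delta_m1 \<xi> k" for k
  have g: "l2seq g" unfolding g_def by (rule l2_add(1)[OF f delta_l2])
  have hs: "((\<lambda>k. riesz_Q A (G (n - k) (g k))) has_sum riesz_Q A (T g n)) UNIV"
    unfolding T_def by (rule has_sum_bounded_linear[OF Q_bl has_sum_infsum[OF T_summable[OF g]]])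
  have s1: "(\<lambda>k. riesz_Q A (G (n - k) (g k))) summable_on {..<n}"
    using summable_on_bounded_linear[OF Q_bl T_summable[OF g]] .
  have s2: "(\<lambda>k. riesz_Q A (G (n - k) (g k))) summable_on {n..}"
    using summable_on_bounded_linear[OF Q_bl T_summable[OF g]] .
  have "riesz_Q A (T g n) = (\<Sum>\<^sub>\<infinity>k. riesz_Q A (G (n - k) (g k)))"
    using hs by (simp add: infsumI)
  also have "\<dots> = (\<Sum>\<^sub>\<infinity>k\<in>{..<n} \<union> {n..}. riesz_Q A (G (n - k) (g k)))"
    by (rule arg_cong[where f="infsum _"]) auto
  also have "\<dots> = (\<Sum>\<^sub>\<infinity>k\<in>{..<n}. riesz_Q A (G (n - k) (g k))) + (\<Sum>\<^sub>\<infinity>k\<in>{n..}. riesz_Q A (G (n - k) (g k)))"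
    by (rule infsum_Un_disjoint[OF s1 s2]) auto
  also have "(\<Sum>\<^sub>\<infinity>k\<in>{..<n}. riesz_Q A (G (n - k) (g k))) = 0"
    by (rule infsum_0) (auto intro!: Q_Gpos)
  also have "(\<Sum>\<^sub>\<infinity>k\<in>{n..}. riesz_Q A (G (n - k) (g k))) = (\<Sum>\<^sub>\<infinity>k\<in>{n..}. - QAQ_negpow A (nat (k + 1 - n)) (riesz_Q A (f k)))"
  proof (rule infsum_cong)
    fix k assume k: "k \<in> {n..}"
    then have gk: "g k = f k" using n by (auto simp: g_def delta_m1_def)
    have j: "nat (k + 1 - n) = Suc (nat (k - n))" "- int (nat (k - n)) = n - k" using k by auto
    show "riesz_Q A (G (n - k) (g k)) = - QAQ_negpow A (nat (k + 1 - n)) (riesz_Q A (f k))"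
      using k negpow[of "nat (k - n)" "f k"] unfolding gk j by (simp add: Q_Gnonpos)
  qed
  also have "\<dots> = - (\<Sum>\<^sub>\<infinity>k\<in>{n..}. QAQ_negpow A (nat (k + 1 - n)) (riesz_Q A (f k)))"
    by (rule infsum_uminus)
  finally show ?thesis unfolding g_def by simp
qed

lemma T_diff:
  assumes a: "l2seq a" and b: "l2seq b"
  shows "T a n - T b n = T (\<lambda>k. a k - b k) n"
proof -
  have "((\<lambda>k. G (n - k) (a k) - G (n - k) (b k)) has_sum (T a n - T b n)) UNIV"
    unfolding T_def by (rule has_sum_diff'[OF has_sum_infsum[OF T_summable[OF a]] has_sum_infsum[OF T_summable[OF b]]])
  then show ?thesis unfolding T_def by (simp add: infsumI bl_diff[OF G_bl])
qed

end

theorem theorem4p9: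
  fixes A :: "'h::complex_hilbert \<Rightarrow> 'h"
    and F :: "(int \<Rightarrow> 'h) \<Rightarrow> (int \<Rightarrow> 'h)"
    and Lip :: real and \<xi> :: 'h and u :: "int \<Rightarrow> 'h"
  assumes sep: "separable_space (euclidean :: 'h topology)"
    and A_bdd: "bounded_clinear_op A"
    and hyp: "hyperbolic A"
    and F_l2: "\<forall>w. l2seq w \<longrightarrow> l2seq (F w)"
    and F_lip: "\<forall>v w. l2seq v \<longrightarrow> l2seq w \<longrightarrow> l2norm (\<lambda>n. F v n - F w n) \<le> Lip * l2norm (\<lambda>n. v n - w n)"
    and Lip_small: "Lip < 1 / M1 A"
    and \<xi>_P: "\<xi> \<in> range (riesz_P A)"
    and u_l2: "l2seq u"
  shows "(L1 A F \<xi> u = u \<and> (\<forall>w. l2seq w \<longrightarrow> L1 A F \<xi> w = w \<longrightarrow> w = u))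
     \<longleftrightarrow>
     (spt u \<subseteq> {0..} \<and>
      (\<forall>n::int. 0 \<le> n \<longrightarrow>
         riesz_P A (u n) = PAP_pow A (nat n) \<xi>
            + (\<Sum>\<^sub>\<infinity>k\<in>{..<n}. PAP_pow A (nat (n - 1 - k)) (riesz_P A (F u k)))
       \<and> riesz_Q A (u n) = - (\<Sum>\<^sub>\<infinity>k\<in>{n..}. QAQ_negpow A (nat (k + 1 - n)) (riesz_Q A (F u k)))))"
proof -
  interpret H: hyp_op A using A_bdd hyp by (rule hyp_op.intro)
  define g where "g w = (\<lambda>n. F w n + delta_m1 \<xi> n)" for w
  have Fl2: "l2seq w \<Longrightarrow> l2seq (F w)" for w using F_l2 by blast
  have gl2: "l2seq w \<Longrightarrow> l2seq (g w)" for w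
    unfolding g_def by (rule l2_add(1)[OF Fl2 delta_l2])
  have L1_eq: "l2seq w \<Longrightarrow> L1 A F \<xi> w = chi_nonneg (H.T (g w))" for w
    using H.shift_minus_inv_T[OF gl2] unfolding L1_def g_def by simp
  have Pf: "riesz_P A (H.T (g u) n) = PAP_pow A (nat n) \<xi>
            + (\<Sum>\<^sub>\<infinity>k\<in>{..<n}. PAP_pow A (nat (n - 1 - k)) (riesz_P A (F u k)))" if "0 \<le> n" for n
    unfolding g_def by (rule H.P_formula[OF Fl2[OF u_l2] \<xi>_P that])
  have Qf: "riesz_Q A (H.T (g u) n) = - (\<Sum>\<^sub>\<infinity>k\<in>{n..}. QAQ_negpow A (nat (k + 1 - n)) (riesz_Q A (F u k)))"
    if "0 \<le> n" for n
    unfolding g_def by (rule H.Q_formula[OF Fl2[OF u_l2] that])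
  have PQ: "x = riesz_P A x + riesz_Q A x" for x by (simp add: riesz_Q_def)
  show ?thesis
  proof
    assume i: "L1 A F \<xi> u = u \<and> (\<forall>w. l2seq w \<longrightarrow> L1 A F \<xi> w = w \<longrightarrow> w = u)"
    then have ueq: "chi_nonneg (H.T (g u)) = u" using L1_eq[OF u_l2] by simp
    have un: "u n = (if 0 \<le> n then H.T (g u) n else 0)" for n
      using fun_cong[OF ueq, of n] by (simp add: chi_nonneg_def)
    show "spt u \<subseteq> {0..} \<and>
      (\<forall>n::int. 0 \<le> n \<longrightarrow>
         riesz_P A (u n) = PAP_pow A (nat n) \<xi>
            + (\<Sum>\<^sub>\<infinity>k\<in>{..<n}. PAP_pow A (nat (n - 1 - k)) (riesz_P A (F u k)))
       \<and> riesz_Q A (u n) = - (\<Sum>\<^sub>\<infinity>k\<in>{n..}. QAQ_negpow A (nat (k + 1 - n)) (riesz_Q A (F u k))))"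
    proof (intro conjI allI impI)
      show "spt u \<subseteq> {0..}"
      proof
        fix n assume "n \<in> spt u"
        then have "u n \<noteq> 0" by (simp add: spt_def)
        then show "n \<in> {0..}" using un[of n] by (auto split: if_splits)
      qed
      fix n :: int assume n: "0 \<le> n"
      show "riesz_P A (u n) = PAP_pow A (nat n) \<xi>
            + (\<Sum>\<^sub>\<infinity>k\<in>{..<n}. PAP_pow A (nat (n - 1 - k)) (riesz_P A (F u k)))"
        using Pf[OF n] un[of n] n by simp
      show "riesz_Q A (u n) = - (\<Sum>\<^sub>\<infinity>k\<in>{n..}. QAQ_negpow A (nat (k + 1 - n)) (riesz_Q A (F u k)))"
        using Qf[OF n] un[of n] n by simp
    qed
  next
    assume ii: "spt u \<subseteq> {0..} \<and>
      (\<forall>n::int. 0 \<le> n \<longrightarrow>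
         riesz_P A (u n) = PAP_pow A (nat n) \<xi>
            + (\<Sum>\<^sub>\<infinity>k\<in>{..<n}. PAP_pow A (nat (n - 1 - k)) (riesz_P A (F u k)))
       \<and> riesz_Q A (u n) = - (\<Sum>\<^sub>\<infinity>k\<in>{n..}. QAQ_negpow A (nat (k + 1 - n)) (riesz_Q A (F u k))))"
    have ueq: "chi_nonneg (H.T (g u)) = u"
    proof
      fix n
      show "chi_nonneg (H.T (g u)) n = u n"
      proof (cases "0 \<le> n")
        case True
        have "H.T (g u) n = riesz_P A (H.T (g u) n) + riesz_Q A (H.T (g u) n)" by (rule PQ)
        also have "\<dots> = riesz_P A (u n) + riesz_Q A (u n)" using ii True Pf[OF True] Qf[OF True] by simp
        also have "\<dots> = u n" by (rule PQ[symmetric])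
        finally show ?thesis using True by (simp add: chi_nonneg_def)
      next
        case False
        then have "n \<notin> spt u" using ii by auto
        then show ?thesis using False by (simp add: chi_nonneg_def spt_def)
      qed
    qed
    have fixu: "L1 A F \<xi> u = u" using L1_eq[OF u_l2] ueq by simp
    show "L1 A F \<xi> u = u \<and> (\<forall>w. l2seq w \<longrightarrow> L1 A F \<xi> w = w \<longrightarrow> w = u)"
    proof (intro conjI allI impI fixu)
      fix w assume w: "l2seq w" and fw: "L1 A F \<xi> w = w"
      have weq: "chi_nonneg (H.T (g w)) = w" using L1_eq[OF w] fw by simp
      define h where "h k = F w k - F u k" for k
      define d where "d n = w n - u n" for n
      have hl2: "l2seq h" unfolding h_def by (rule l2_add(2)[OF Fl2[OF w] Fl2[OF u_l2]])
      have dl2: "l2seq d" unfolding d_def by (rule l2_add(2)[OF w u_l2])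
      have dn: "d n = chi_nonneg (H.T h) n" for n
      proof -
        have "d n = chi_nonneg (H.T (g w)) n - chi_nonneg (H.T (g u)) n"
          unfolding d_def using weq ueq by simp
        also have "\<dots> = (if 0 \<le> n then H.T (g w) n - H.T (g u) n else 0)"
          by (simp add: chi_nonneg_def)
        also have "H.T (g w) n - H.T (g u) n = H.T (\<lambda>k. g w k - g u k) n"
          by (rule H.T_diff[OF gl2[OF w] gl2[OF u_l2]])
        also have "(\<lambda>k. g w k - g u k) = h" by (auto simp: g_def h_def)
        finally show ?thesis by (simp add: chi_nonneg_def)
      qed
      define Id where "Id = (\<Sum>\<^sub>\<infinity>n. (norm (d n))\<^sup>2)"
      define Ih where "Ih = (\<Sum>\<^sub>\<infinity>n. (norm (h n))\<^sup>2)"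
      have Id0: "0 \<le> Id" unfolding Id_def by (rule infsum_nonneg) simp
      have Ih0: "0 \<le> Ih" unfolding Ih_def by (rule infsum_nonneg) simp
      have M0: "0 \<le> M1 A" by (rule H.M1_nonneg)
      have "Id \<le> (\<Sum>\<^sub>\<infinity>n. (norm (H.T h n))\<^sup>2)"
        unfolding Id_def
      proof (rule infsum_mono)
        show "(\<lambda>n. (norm (d n))\<^sup>2) summable_on UNIV" using dl2 by (simp add: l2seq_def)
        show "(\<lambda>n. (norm (H.T h n))\<^sup>2) summable_on UNIV" using H.T_l2(1)[OF hl2] by (simp add: l2seq_def)
        fix n show "(norm (d n))\<^sup>2 \<le> (norm (H.T h n))\<^sup>2" by (simp add: dn chi_nonneg_def)
      qed
      also have "\<dots> \<le> (M1 A)\<^sup>2 * Ih" unfolding Ih_def by (rule H.T_l2(2)[OF hl2])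
      finally have "Id \<le> (M1 A)\<^sup>2 * Ih" .
      then have s1: "sqrt Id \<le> M1 A * sqrt Ih"
        using M0 by (metis real_sqrt_le_mono real_sqrt_mult real_sqrt_abs abs_of_nonneg power2_eq_square real_sqrt_pow2 power2_abs)
      have "l2norm (\<lambda>n. F w n - F u n) \<le> Lip * l2norm (\<lambda>n. w n - u n)" using F_lip w u_l2 by blast
      then have s2: "sqrt Ih \<le> Lip * sqrt Id" unfolding l2norm_def Ih_def Id_def h_def d_def .
      have "sqrt Id \<le> M1 A * (Lip * sqrt Id)"
        using s1 mult_left_mono[OF s2 M0] by linarith
      then have "sqrt Id = 0"
      proof (cases "M1 A = 0")
        case True
        then show ?thesis using \<open>sqrt Id \<le> M1 A * (Lip * sqrt Id)\<close> Id0 by simp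
      next
        case False
        then have Mpos: "0 < M1 A" using M0 by simp
        then have "M1 A * Lip < 1" using Lip_small by (simp add: field_simps)
        show ?thesis
        proof (rule ccontr)
          assume "sqrt Id \<noteq> 0"
          then have "0 < sqrt Id" using Id0 by simp
          then have "M1 A * Lip * sqrt Id < sqrt Id" using \<open>M1 A * Lip < 1\<close> by simp
          with \<open>sqrt Id \<le> M1 A * (Lip * sqrt Id)\<close> show False by (simp add: mult.assoc)
        qed
      qed
      then have "Id = 0" using Id0 by simp
      have "(norm (d n))\<^sup>2 = 0" for n
      proof (rule nonneg_infsum_le_0D[where A=UNIV and f="\<lambda>n. (norm (d n))\<^sup>2"])
        show "(\<Sum>\<^sub>\<infinity>n. (norm (d n))\<^sup>2) \<le> 0" using \<open>Id = 0\<close> unfolding Id_def by simp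
        show "(\<lambda>n. (norm (d n))\<^sup>2) summable_on UNIV" using dl2 by (simp add: l2seq_def)
      qed auto
      then show "w = u" by (auto simp: d_def fun_eq_iff)
    qed
  qed
qed

end
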